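(* The variety $\mathsf{V}(S_{(4,430)})$ is the ai-semiring variety defined by the identities $xy\approx yx$, $x^4\approx x^3$, $x^3\approx x^2+x$, $x+xy\approx x+x^2y$, $x^2+y^2\approx x^2+y^2+xy$, $x_1x_2x_3\approx x_1x_2x_3+x_1x_2x_3x_4$.
   Context: An ai-semiring is an algebra $(S,+,\cdot)$ with $(S,+)$ a semilattice, $(S,\cdot)$ a semigroup, and both distributive laws. $\mathsf{V}(S)$ is the variety generated by $S$; "the ai-semiring variety defined by identities $\Sigma$" is the class of all ai-semirings satisfying $\Sigma$. $S_{(4,430)}$ has carrier $\{1,2,3,4\}$; addition: $x+x=x$, $2+x=x$, $1+x=1$ for all $x$, $3+4=1$; multiplication (row $a$, column $b$ gives $a\cdot b$): row $1$: $1,2,1,1$; row $2$: $2,2,2,2$; row $3$: $1,2,1,1$; row $4$: $1,2,1,3$. *)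

theory Defs
  imports Main
begin

datatype s4 = E1 | E2 | E3 | E4

fun add4 :: "s4 \<Rightarrow> s4 \<Rightarrow> s4" where
  "add4 E1 y = E1"
| "add4 x E1 = E1"
| "add4 E2 y = y"
| "add4 x E2 = x"
| "add4 E3 E3 = E3"
| "add4 E4 E4 = E4"
| "add4 E3 E4 = E1"
| "add4 E4 E3 = E1"

fun mul4 :: "s4 \<Rightarrow> s4 \<Rightarrow> s4" where
  "mul4 E2 y = E2"
| "mul4 x E2 = E2"
| "mul4 E4 E4 = E3"
| "mul4 x y = E1"

definition ai_semiring :: "'a set \<Rightarrow> ('a \<Rightarrow> 'a \<Rightarrow> 'a) \<Rightarrow> ('a \<Rightarrow> 'a \<Rightarrow> 'a) \<Rightarrow> bool" where
  "ai_semiring A p m \<longleftrightarrow>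
     (\<forall>x\<in>A. \<forall>y\<in>A. p x y \<in> A \<and> m x y \<in> A) \<and>
     (\<forall>x\<in>A. \<forall>y\<in>A. \<forall>z\<in>A. p (p x y) z = p x (p y z)) \<and>
     (\<forall>x\<in>A. \<forall>y\<in>A. p x y = p y x) \<and>
     (\<forall>x\<in>A. p x x = x) \<and>
     (\<forall>x\<in>A. \<forall>y\<in>A. \<forall>z\<in>A. m (m x y) z = m x (m y z)) \<and>
     (\<forall>x\<in>A. \<forall>y\<in>A. \<forall>z\<in>A. m x (p y z) = p (m x y) (m x z)) \<and>
     (\<forall>x\<in>A. \<forall>y\<in>A. \<forall>z\<in>A. m (p x y) z = p (m x z) (m y z))"

definition satisfies_Sigma :: "'a set \<Rightarrow> ('a \<Rightarrow> 'a \<Rightarrow> 'a) \<Rightarrow> ('a \<Rightarrow> 'a \<Rightarrow> 'a) \<Rightarrow> bool" where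
  "satisfies_Sigma A p m \<longleftrightarrow>
     (\<forall>x\<in>A. \<forall>y\<in>A. m x y = m y x) \<and>
     (\<forall>x\<in>A. m (m (m x x) x) x = m (m x x) x) \<and>
     (\<forall>x\<in>A. m (m x x) x = p (m x x) x) \<and>
     (\<forall>x\<in>A. \<forall>y\<in>A. p x (m x y) = p x (m (m x x) y)) \<and>
     (\<forall>x\<in>A. \<forall>y\<in>A. p (m x x) (m y y) = p (p (m x x) (m y y)) (m x y)) \<and>
     (\<forall>x1\<in>A. \<forall>x2\<in>A. \<forall>x3\<in>A. \<forall>x4\<in>A.
        m (m x1 x2) x3 = p (m (m x1 x2) x3) (m (m (m x1 x2) x3) x4))"

text \<open>A belongs to HSP(S) iff it is a homomorphic image of a subalgebra of a direct
  power of S.  For an algebra on type 'a, the power S^J with J the set of all maps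
  'a => S suffices (the relatively free algebra on |A| generators embeds in it),
  so we fix that index set.\<close>
definition in_V_S4 :: "'a set \<Rightarrow> ('a \<Rightarrow> 'a \<Rightarrow> 'a) \<Rightarrow> ('a \<Rightarrow> 'a \<Rightarrow> 'a) \<Rightarrow> bool" where
  "in_V_S4 A p m \<longleftrightarrow>
     (\<exists>(B :: (('a \<Rightarrow> s4) \<Rightarrow> s4) set) (h :: (('a \<Rightarrow> s4) \<Rightarrow> s4) \<Rightarrow> 'a).
        (\<forall>f\<in>B. \<forall>g\<in>B. (\<lambda>j. add4 (f j) (g j)) \<in> B \<and> (\<lambda>j. mul4 (f j) (g j)) \<in> B) \<and>
        h ` B = A \<and>
        (\<forall>f\<in>B. \<forall>g\<in>B. h (\<lambda>j. add4 (f j) (g j)) = p (h f) (h g) \<and>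
                      h (\<lambda>j. mul4 (f j) (g j)) = m (h f) (h g)))"

end

theory Submission
  imports Defs "HOL-Library.Multiset"
begin

datatype 'a tm = V 'a | P "'a tm" "'a tm" | M "'a tm" "'a tm"

fun ev :: "('b \<Rightarrow> 'b \<Rightarrow> 'b) \<Rightarrow> ('b \<Rightarrow> 'b \<Rightarrow> 'b) \<Rightarrow> ('a \<Rightarrow> 'b) \<Rightarrow> 'a tm \<Rightarrow> 'b" where
  "ev p m e (V x) = e x"
| "ev p m e (P a b) = p (ev p m e a) (ev p m e b)"
| "ev p m e (M a b) = m (ev p m e a) (ev p m e b)"

fun vars :: "'a tm \<Rightarrow> 'a set" where
  "vars (V x) = {x}"
| "vars (P a b) = vars a \<union> vars b"
| "vars (M a b) = vars a \<union> vars b"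

fun mons :: "'a tm \<Rightarrow> 'a list set" where
  "mons (V x) = {[x]}"
| "mons (P a b) = mons a \<union> mons b"
| "mons (M a b) = {u @ w | u w. u \<in> mons a \<and> w \<in> mons b}"

fun prodG :: "('b \<Rightarrow> 'b \<Rightarrow> 'b) \<Rightarrow> ('a \<Rightarrow> 'b) \<Rightarrow> 'a list \<Rightarrow> 'b" where
  "prodG m e [] = undefined"
| "prodG m e [x] = e x"
| "prodG m e (x # y # zs) = m (e x) (prodG m e (y # zs))"

lemma prodG_Cons: "xs \<noteq> [] \<Longrightarrow> prodG m e (x # xs) = m (e x) (prodG m e xs)"
  by (cases xs) auto

lemma mons_ne: "w \<in> mons t \<Longrightarrow> w \<noteq> [] \<and> set w \<subseteq> vars t"
  by (induction t arbitrary: w) fastforce+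

locale csr =
  fixes A :: "'b set" and p m :: "'b \<Rightarrow> 'b \<Rightarrow> 'b"
  assumes ai: "ai_semiring A p m"
    and mcomm: "\<forall>x\<in>A. \<forall>y\<in>A. m x y = m y x"
begin

lemma pA[simp]: "x \<in> A \<Longrightarrow> y \<in> A \<Longrightarrow> p x y \<in> A"
  using ai unfolding ai_semiring_def by blast
lemma mA[simp]: "x \<in> A \<Longrightarrow> y \<in> A \<Longrightarrow> m x y \<in> A"
  using ai unfolding ai_semiring_def by blast
lemma p_assoc: "x \<in> A \<Longrightarrow> y \<in> A \<Longrightarrow> z \<in> A \<Longrightarrow> p (p x y) z = p x (p y z)"
  using ai unfolding ai_semiring_def by blast
lemma p_comm: "x \<in> A \<Longrightarrow> y \<in> A \<Longrightarrow> p x y = p y x"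
  using ai unfolding ai_semiring_def by blast
lemma p_idem[simp]: "x \<in> A \<Longrightarrow> p x x = x"
  using ai unfolding ai_semiring_def by blast
lemma m_assoc: "x \<in> A \<Longrightarrow> y \<in> A \<Longrightarrow> z \<in> A \<Longrightarrow> m (m x y) z = m x (m y z)"
  using ai unfolding ai_semiring_def by blast
lemma m_comm: "x \<in> A \<Longrightarrow> y \<in> A \<Longrightarrow> m x y = m y x"
  using mcomm by blast
lemma distL: "x \<in> A \<Longrightarrow> y \<in> A \<Longrightarrow> z \<in> A \<Longrightarrow> m x (p y z) = p (m x y) (m x z)"
  using ai unfolding ai_semiring_def by blast
lemma distR: "x \<in> A \<Longrightarrow> y \<in> A \<Longrightarrow> z \<in> A \<Longrightarrow> m (p x y) z = p (m x z) (m y z)"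
  using ai unfolding ai_semiring_def by blast

lemma le_trans: "a \<in> A \<Longrightarrow> b \<in> A \<Longrightarrow> c \<in> A \<Longrightarrow> p a b = b \<Longrightarrow> p b c = c \<Longrightarrow> p a c = c"
  by (metis p_assoc)
lemma le_addL: "a \<in> A \<Longrightarrow> b \<in> A \<Longrightarrow> p a (p a b) = p a b"
  by (metis p_assoc p_idem)
lemma le_addR: "a \<in> A \<Longrightarrow> b \<in> A \<Longrightarrow> p b (p a b) = p a b"
  by (metis p_assoc p_comm p_idem)
lemma le_sum: "a \<in> A \<Longrightarrow> b \<in> A \<Longrightarrow> c \<in> A \<Longrightarrow> p a c = c \<Longrightarrow> p b c = c \<Longrightarrow> p (p a b) c = c"
  by (metis p_assoc)
lemma le_antisym: "a \<in> A \<Longrightarrow> b \<in> A \<Longrightarrow> p a b = b \<Longrightarrow> p b a = a \<Longrightarrow> a = b"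
  by (metis p_comm)
lemma le_multR: "a \<in> A \<Longrightarrow> b \<in> A \<Longrightarrow> c \<in> A \<Longrightarrow> p a b = b \<Longrightarrow> p (m a c) (m b c) = m b c"
  by (metis distR)
lemma le_multL: "a \<in> A \<Longrightarrow> b \<in> A \<Longrightarrow> c \<in> A \<Longrightarrow> p a b = b \<Longrightarrow> p (m c a) (m c b) = m c b"
  by (metis distL)
lemma le_mult2: "a \<in> A \<Longrightarrow> b \<in> A \<Longrightarrow> c \<in> A \<Longrightarrow> d \<in> A \<Longrightarrow> p a b = b \<Longrightarrow> p c d = d
   \<Longrightarrow> p (m a c) (m b d) = m b d"
  by (meson le_multL le_multR le_trans mA)

lemma ev_closed: "e ` vars t \<subseteq> A \<Longrightarrow> ev p m e t \<in> A"
  by (induction t) (simp_all add: image_Un)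

lemma prodG_closed: "w \<noteq> [] \<Longrightarrow> e ` set w \<subseteq> A \<Longrightarrow> prodG m e w \<in> A"
proof (induction w)
  case (Cons x xs) then show ?case by (cases xs) (auto simp: prodG_Cons)
qed simp

lemma prodG_append: "a \<noteq> [] \<Longrightarrow> b \<noteq> [] \<Longrightarrow> e ` set a \<subseteq> A \<Longrightarrow> e ` set b \<subseteq> A
   \<Longrightarrow> prodG m e (a @ b) = m (prodG m e a) (prodG m e b)"
proof (induction a)
  case Nil then show ?case by simp
next
  case (Cons x a)
  show ?case
  proof (cases "a = []")
    case True then show ?thesis using Cons by (simp add: prodG_Cons)
  next
    case False
    then have "prodG m e ((x # a) @ b) = m (e x) (prodG m e (a @ b))"
      using Cons by (simp add: prodG_Cons)
    also have "\<dots> = m (e x) (m (prodG m e a) (prodG m e b))" using Cons False by simp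
    also have "\<dots> = m (m (e x) (prodG m e a)) (prodG m e b)"
      using Cons False by (simp add: m_assoc prodG_closed)
    finally show ?thesis using False by (simp add: prodG_Cons)
  qed
qed

lemma mono1: "e ` vars t \<subseteq> A \<Longrightarrow> w \<in> mons t \<Longrightarrow> p (prodG m e w) (ev p m e t) = ev p m e t"
proof (induction t arbitrary: w)
  case (V x) then show ?case by simp
next
  case (P a b)
  have A1: "ev p m e a \<in> A" "ev p m e b \<in> A" using P.prems by (auto intro: ev_closed)
  have wA: "prodG m e w \<in> A" using P.prems mons_ne[of w "P a b"] prodG_closed by blast
  from P.prems(2) consider "w \<in> mons a" | "w \<in> mons b" by auto
  then show ?case
  proof cases
    case 1 then have "p (prodG m e w) (ev p m e a) = ev p m e a" using P by auto
    then show ?thesis using A1 wA by (simp add: le_addL le_trans[of _ "ev p m e a"])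
  next
    case 2 then have "p (prodG m e w) (ev p m e b) = ev p m e b" using P by auto
    then show ?thesis using A1 wA by (simp add: le_addR le_trans[of _ "ev p m e b"])
  qed
next
  case (M a b)
  have A1: "ev p m e a \<in> A" "ev p m e b \<in> A" using M.prems by (auto intro: ev_closed)
  from M.prems(2) obtain u1 u2 where w: "w = u1 @ u2" "u1 \<in> mons a" "u2 \<in> mons b" by auto
  have u: "u1 \<noteq> []" "u2 \<noteq> []" "e ` set u1 \<subseteq> A" "e ` set u2 \<subseteq> A"
    using w mons_ne M.prems(1) by fastforce+
  have "p (prodG m e u1) (ev p m e a) = ev p m e a" "p (prodG m e u2) (ev p m e b) = ev p m e b"
    using M w by auto
  then show ?case using w u A1 by (simp add: prodG_append le_mult2 prodG_closed)
qed

lemma mono2': "e ` vars t \<subseteq> A \<Longrightarrow> Y \<in> A \<Longrightarrow> X \<in> A \<Longrightarrow>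
  (\<forall>w\<in>mons t. p (m (prodG m e w) Y) X = X) \<Longrightarrow> p (m (ev p m e t) Y) X = X"
proof (induction t arbitrary: Y)
  case (V x) then show ?case by simp
next
  case (P a b)
  have A1: "ev p m e a \<in> A" "ev p m e b \<in> A" using P.prems by (auto intro: ev_closed)
  have "p (m (ev p m e a) Y) X = X" by (rule P.IH(1)) (use P.prems in auto)
  moreover have "p (m (ev p m e b) Y) X = X" by (rule P.IH(2)) (use P.prems in auto)
  ultimately
  show ?case using A1 P.prems by (simp add: distR le_sum)
next
  case (M a b)
  have A1: "ev p m e a \<in> A" "ev p m e b \<in> A" using M.prems by (auto intro: ev_closed)
  have "p (m (ev p m e a) (m (ev p m e b) Y)) X = X"
  proof (rule M.IH(1))
    show "\<forall>w\<in>mons a. p (m (prodG m e w) (m (ev p m e b) Y)) X = X"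
    proof
      fix u1 assume u1: "u1 \<in> mons a"
      have u1A: "u1 \<noteq> []" "e ` set u1 \<subseteq> A" using u1 mons_ne M.prems(1) by fastforce+
      have "p (m (ev p m e b) (m (prodG m e u1) Y)) X = X"
      proof (rule M.IH(2))
        show "\<forall>w\<in>mons b. p (m (prodG m e w) (m (prodG m e u1) Y)) X = X"
        proof
          fix u2 assume u2: "u2 \<in> mons b"
          have u2A: "u2 \<noteq> []" "e ` set u2 \<subseteq> A" using u2 mons_ne M.prems(1) by fastforce+
          have "u1 @ u2 \<in> mons (M a b)" using u1 u2 by auto
          then have "p (m (prodG m e (u1 @ u2)) Y) X = X" using M.prems by auto
          then show "p (m (prodG m e u2) (m (prodG m e u1) Y)) X = X"
            using u1A u2A M.prems
            by (simp add: prodG_append prodG_closed m_assoc m_comm[of "prodG m e u1"])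
        qed
      qed (use M.prems u1A prodG_closed[of u1 e] in auto)
      then show "p (m (prodG m e u1) (m (ev p m e b) Y)) X = X"
        using u1A A1 M.prems
        by (metis m_assoc m_comm prodG_closed)
    qed
  qed (use M.prems A1 in auto)
  then show ?case using A1 M.prems by (simp add: m_assoc)
qed

lemma mono2: "e ` vars t \<subseteq> A \<Longrightarrow> X \<in> A \<Longrightarrow>
  (\<forall>w\<in>mons t. p (prodG m e w) X = X) \<Longrightarrow> p (ev p m e t) X = X"
proof (induction t)
  case (V x) then show ?case by simp
next
  case (P a b)
  have A1: "ev p m e a \<in> A" "ev p m e b \<in> A" using P.prems by (auto intro: ev_closed)
  have "p (ev p m e a) X = X" by (rule P.IH(1)) (use P.prems in auto)
  moreover have "p (ev p m e b) X = X" by (rule P.IH(2)) (use P.prems in auto)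
  ultimately show ?case using A1 P.prems by (simp add: le_sum)
next
  case (M a b)
  have A1: "ev p m e a \<in> A" "ev p m e b \<in> A" using M.prems by (auto intro: ev_closed)
  have "p (m (ev p m e a) (ev p m e b)) X = X"
  proof (rule mono2')
    show "\<forall>w\<in>mons a. p (m (prodG m e w) (ev p m e b)) X = X"
    proof
      fix u1 assume u1: "u1 \<in> mons a"
      have u1A: "u1 \<noteq> []" "e ` set u1 \<subseteq> A" using u1 mons_ne M.prems(1) by fastforce+
      have "p (m (ev p m e b) (prodG m e u1)) X = X"
      proof (rule mono2')
        show "\<forall>w\<in>mons b. p (m (prodG m e w) (prodG m e u1)) X = X"
        proof
          fix u2 assume u2: "u2 \<in> mons b"
          have u2A: "u2 \<noteq> []" "e ` set u2 \<subseteq> A" using u2 mons_ne M.prems(1) by fastforce+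
          have "u1 @ u2 \<in> mons (M a b)" using u1 u2 by auto
          then have "p (prodG m e (u1 @ u2)) X = X" using M.prems by auto
          then show "p (m (prodG m e u2) (prodG m e u1)) X = X"
            using u1A u2A M.prems
            by (simp add: prodG_append prodG_closed m_comm[of "prodG m e u1"])
        qed
      qed (use M.prems u1A prodG_closed in auto)
      then show "p (m (prodG m e u1) (ev p m e b)) X = X"
        using u1A A1 M.prems by (metis m_comm prodG_closed)
    qed
  qed (use M.prems A1 in auto)
  then show ?case by simp
qed

end


lemma long_split: "3 \<le> length u \<Longrightarrow> \<exists>a b r. u = a # b # r \<and> r \<noteq> []"
  by (cases u; cases "tl u") auto

locale sig = csr +
  assumes sat: "satisfies_Sigma A p m"
begin

abbreviation le where "le a b \<equiv> p a b = b"

lemma id2: "x \<in> A \<Longrightarrow> m (m (m x x) x) x = m (m x x) x"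
  using sat unfolding satisfies_Sigma_def by blast
lemma id3: "x \<in> A \<Longrightarrow> m (m x x) x = p (m x x) x"
  using sat unfolding satisfies_Sigma_def by blast
lemma id4: "x \<in> A \<Longrightarrow> y \<in> A \<Longrightarrow> p x (m x y) = p x (m (m x x) y)"
  using sat unfolding satisfies_Sigma_def by blast
lemma id5: "x \<in> A \<Longrightarrow> y \<in> A \<Longrightarrow> p (m x x) (m y y) = p (p (m x x) (m y y)) (m x y)"
  using sat unfolding satisfies_Sigma_def by blast
lemma id6: "a \<in> A \<Longrightarrow> b \<in> A \<Longrightarrow> c \<in> A \<Longrightarrow> d \<in> A \<Longrightarrow>
   m (m a b) c = p (m (m a b) c) (m (m (m a b) c) d)"
  using sat unfolding satisfies_Sigma_def by blast

definition pr where "pr w = prodG m id w"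

lemma pr_single[simp]: "pr [x] = x" by (simp add: pr_def)
lemma pr_Cons: "xs \<noteq> [] \<Longrightarrow> pr (x # xs) = m x (pr xs)"
  by (simp add: pr_def prodG_Cons)
lemma pr_closed[simp]: "xs \<noteq> [] \<Longrightarrow> set xs \<subseteq> A \<Longrightarrow> pr xs \<in> A"
  unfolding pr_def by (rule prodG_closed) auto
lemma pr_append: "a \<noteq> [] \<Longrightarrow> b \<noteq> [] \<Longrightarrow> set a \<subseteq> A \<Longrightarrow> set b \<subseteq> A
   \<Longrightarrow> pr (a @ b) = m (pr a) (pr b)"
  unfolding pr_def by (rule prodG_append) auto

lemma pr_remove: "x \<in> set ys \<Longrightarrow> 2 \<le> length ys \<Longrightarrow> set ys \<subseteq> A \<Longrightarrow> pr ys = m x (pr (remove1 x ys))"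
proof (induction ys)
  case Nil then show ?case by simp
next
  case (Cons y ys)
  show ?case
  proof (cases "y = x")
    case True
    then show ?thesis using Cons.prems by (subst pr_Cons) auto
  next
    case False
    then have x: "x \<in> set ys" using Cons.prems by simp
    show ?thesis
    proof (cases "2 \<le> length ys")
      case True
      then have e: "pr ys = m x (pr (remove1 x ys))" using Cons x by auto
      have "length (remove1 x ys) = length ys - 1" using x by (simp add: length_remove1)
      then have ne: "remove1 x ys \<noteq> []" "ys \<noteq> []" using True by auto
      have "set (remove1 x ys) \<subseteq> A" using Cons.prems(3)
        by (meson notin_set_remove1 order_trans set_subset_Cons subsetI subset_iff)
      then have RA: "pr (remove1 x ys) \<in> A" using ne by simp
      have xy: "x \<in> A" "y \<in> A" using Cons.prems x by auto
      have "pr (y # ys) = m y (m x (pr (remove1 x ys)))" using e ne by (simp add: pr_Cons)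
      also have "\<dots> = m (m y x) (pr (remove1 x ys))" using xy RA by (simp add: m_assoc)
      also have "\<dots> = m (m x y) (pr (remove1 x ys))" using xy by (simp add: m_comm)
      also have "\<dots> = m x (pr (y # remove1 x ys))" using xy RA ne by (simp add: m_assoc pr_Cons)
      finally show ?thesis using False by simp
    next
      case False
      then have "ys = [x]" using x
        by (cases ys) (auto simp: Suc_le_eq)
      then show ?thesis using Cons.prems \<open>y \<noteq> x\<close> by (simp add: pr_Cons m_comm)
    qed
  qed
qed

lemma pr_perm: "mset xs = mset ys \<Longrightarrow> xs \<noteq> [] \<Longrightarrow> set xs \<subseteq> A \<Longrightarrow> pr xs = pr ys"
proof (induction xs arbitrary: ys)
  case Nil then show ?case by simp
next
  case (Cons x xs)
  show ?case
  proof (cases "xs = []")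
    case True
    then have "mset ys = {#x#}" using Cons.prems(1) by simp
    then have "ys = [x]" by simp
    then show ?thesis using True by simp
  next
    case False
    have x: "x \<in> set ys" using Cons.prems(1) by (metis list.set_intros(1) set_mset_mset)
    have "length ys = length (x # xs)" using Cons.prems(1) by (metis mset_eq_length)
    then have len: "2 \<le> length ys" using False by (cases xs) auto
    have "set ys = set (x # xs)" using Cons.prems(1) by (metis set_mset_mset)
    then have sA: "set ys \<subseteq> A" using Cons.prems by simp
    have "pr ys = m x (pr (remove1 x ys))" using pr_remove x len sA by blast
    moreover have mxs: "mset xs = mset (remove1 x ys)" using Cons.prems(1)
      by (simp, metis add_mset_remove_trivial)
    moreover have "pr xs = pr (remove1 x ys)" using Cons.IH[OF mxs] False Cons.prems by auto
    ultimately show ?thesis using Cons False by (simp add: pr_Cons)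
  qed
qed

lemma absorb: "3 \<le> length u \<Longrightarrow> set u \<subseteq> A \<Longrightarrow> y \<in> A \<Longrightarrow> le (m (pr u) y) (pr u)"
proof -
  assume a: "3 \<le> length u" "set u \<subseteq> A" "y \<in> A"
  then obtain x1 x2 r where u: "u = x1 # x2 # r" "r \<noteq> []" using long_split by blast
  have A: "x1 \<in> A" "x2 \<in> A" "set r \<subseteq> A" using a u by auto
  have "pr u = m (m x1 x2) (pr r)" using u A by (simp add: pr_Cons m_assoc)
  then have "pr u = p (pr u) (m (pr u) y)" using id6[of x1 x2 "pr r" y] A a u by simp
  moreover have "pr u \<in> A" using a u by simp
  ultimately show ?thesis using a by (metis p_comm mA)
qed

lemma pr_dup: "3 \<le> length u \<Longrightarrow> set u \<subseteq> A \<Longrightarrow> z \<in> set u \<Longrightarrow> pr (z # u) = pr u"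
proof -
  assume a: "3 \<le> length u" "set u \<subseteq> A" "z \<in> set u"
  define r where "r = remove1 z u"
  have lr: "length r = length u - 1" using a unfolding r_def by (simp add: length_remove1)
  have r: "2 \<le> length r" "r \<noteq> []" "set r \<subseteq> A" "z \<in> A" using a lr unfolding r_def
    by (auto dest: notin_set_remove1)
  have e1: "pr u = pr (z # r)" using a unfolding r_def
    by (intro pr_perm) (auto dest: length_pos_if_in_set)
  have e2: "pr (z # u) = pr (z # z # r)" using a unfolding r_def
    by (intro pr_perm) (auto dest: length_pos_if_in_set)
  have i: "le (pr (z # z # r)) (pr (z # r))"
  proof -
    have "pr (z # z # r) = pr ((z # r) @ [z])" using r by (intro pr_perm) auto
    also have "\<dots> = m (pr (z # r)) z" using r pr_append[of "z # r" "[z]"] by simp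
    finally show ?thesis using absorb[of "z # r" z] r by simp
  qed
  have ii: "le (pr (z # r)) (pr (z # z # z # r))"
  proof -
    have "pr (z # z # z # r) = m (m (m z z) z) (pr r)" using r by (simp add: pr_Cons m_assoc)
    also have "\<dots> = p (pr (z # z # r)) (pr (z # r))" using r
      by (simp add: id3 distR pr_Cons m_assoc)
    finally show ?thesis using r by (simp add: le_addR)
  qed
  have iii: "le (pr (z # z # z # r)) (pr (z # z # r))"
  proof -
    have "pr (z # z # z # r) = pr ((z # z # r) @ [z])" using r by (intro pr_perm) auto
    also have "\<dots> = m (pr (z # z # r)) z" using r pr_append[of "z # z # r" "[z]"] by simp
    finally show ?thesis using absorb[of "z # z # r" z] r by simp
  qed
  have c: "pr (z#z#r) \<in> A" "pr (z#r) \<in> A" "pr (z#z#z#r) \<in> A" using r by auto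
  have "le (pr (z#r)) (pr (z#z#r))" using le_trans[OF _ _ _ ii iii] c by blast
  then have "pr (z # z # r) = pr (z # r)" using le_antisym[OF _ _ i] c by blast
  then show ?thesis using e1 e2 by simp
qed

lemma collapse_app: "3 \<le> length u \<Longrightarrow> set u \<subseteq> A \<Longrightarrow> set ys \<subseteq> set u \<Longrightarrow> pr (ys @ u) = pr u"
proof (induction ys)
  case Nil then show ?case by simp
next
  case (Cons y ys)
  have "pr (y # (ys @ u)) = pr (ys @ u)"
    by (rule pr_dup) (use Cons.prems in auto)
  then show ?case using Cons by simp
qed

lemma collapse: "3 \<le> length u \<Longrightarrow> 3 \<le> length u' \<Longrightarrow> set u \<subseteq> A \<Longrightarrow> set u = set u' \<Longrightarrow> pr u = pr u'"
proof -
  assume a: "3 \<le> length u" "3 \<le> length u'" "set u \<subseteq> A" "set u = set u'"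
  have "pr u = pr (u' @ u)" using collapse_app[of u u'] a by simp
  also have "\<dots> = pr (u @ u')" using a by (intro pr_perm) (auto simp: union_commute)
  also have "\<dots> = pr u'" using collapse_app[of u' u] a by simp
  finally show ?thesis .
qed

lemma cube: "x \<in> A \<Longrightarrow> pr [x,x,x] = p (pr [x,x]) x"
proof -
  assume x: "x \<in> A"
  have "pr [x,x,x] = m x (m x x)" by (simp add: pr_Cons)
  also have "\<dots> = m (m x x) x" using x by (simp add: m_comm[of x "m x x"])
  also have "\<dots> = p (pr [x,x]) x" using x by (simp add: id3 pr_Cons)
  finally show ?thesis .
qed

lemma D1: "x \<in> A \<Longrightarrow> le x (pr [x,x,x])"
  using cube[of x] le_addR[of "pr [x,x]" x] by (simp add: pr_Cons)
lemma D2: "x \<in> A \<Longrightarrow> le (pr [x,x]) (pr [x,x,x])"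
  using cube[of x] le_addL[of "pr [x,x]" x] by (simp add: pr_Cons)


lemma D3: "x \<in> A \<Longrightarrow> y \<in> A \<Longrightarrow> le (pr [x,y]) (pr [x,x,y])"
proof -
  assume xy: "x \<in> A" "y \<in> A"
  have "pr [x,x,x,y] = m (m (m x x) x) y" using xy by (simp add: pr_Cons m_assoc)
  also have "\<dots> = p (pr [x,x,y]) (pr [x,y])" using xy by (simp add: id3 distR pr_Cons m_assoc)
  finally have 1: "le (pr [x,y]) (pr [x,x,x,y])" using xy by (simp add: le_addR pr_Cons)
  have "pr [x,x,x,y] = pr ([x,x,y] @ [x])" using xy by (intro pr_perm) auto
  also have "\<dots> = m (pr [x,x,y]) x" using xy pr_append[of "[x,x,y]" "[x]"] by simp
  finally have 2: "le (pr [x,x,x,y]) (pr [x,x,y])" using absorb[of "[x,x,y]" x] xy by simp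
  show ?thesis using le_trans[OF _ _ _ 1 2] xy by simp
qed



lemma D4: "x \<in> A \<Longrightarrow> y \<in> A \<Longrightarrow> le (pr [x,y]) (pr [x,x,x])"
proof -
  assume xy: "x \<in> A" "y \<in> A"
  have c1: "pr [x,x] \<in> A" "pr [x,x,y] \<in> A" "pr [x,x,x,y] \<in> A" "pr [x,x,x] \<in> A" "pr [x,y] \<in> A"
    using xy by auto
  have "m x (p x (m x y)) = m x (p x (m (m x x) y))" using xy id4[of x y] by simp
  then have eq: "p (pr [x,x]) (pr [x,x,y]) = p (pr [x,x]) (pr [x,x,x,y])"
    using xy by (simp add: distL pr_Cons m_assoc)
  have a0: "le (pr [x,x,y]) (p (pr [x,x]) (pr [x,x,y]))" using le_addR[OF c1(1) c1(2)] .
  have a: "le (pr [x,x,y]) (p (pr [x,x]) (pr [x,x,x,y]))" using a0 by (simp only: eq)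
  have "pr [x,x,x,y] = pr ([x,x,x] @ [y])" by simp
  also have "\<dots> = m (pr [x,x,x]) y" using xy pr_append[of "[x,x,x]" "[y]"] by simp
  finally have b: "le (pr [x,x,x,y]) (pr [x,x,x])" using absorb[of "[x,x,x]" y] xy by simp
  have c: "le (p (pr [x,x]) (pr [x,x,x,y])) (pr [x,x,x])"
    using le_sum[OF c1(1) c1(3) c1(4) D2[OF xy(1)] b] .
  have c': "le (pr [x,x,y]) (pr [x,x,x])" using le_trans[OF c1(2) _ c1(4) a c] c1 by simp
  have e4: "p x (pr [x,y]) = p x (pr [x,x,y])" using xy id4[of x y] by (simp add: pr_Cons m_assoc)
  have f: "le (p x (pr [x,x,y])) (pr [x,x,x])" using le_sum[OF xy(1) c1(2) c1(4) D1[OF xy(1)] c'] .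
  have g: "le (pr [x,y]) (p x (pr [x,y]))" using xy(1) c1(5) by (rule le_addR)
  show ?thesis using le_trans[OF c1(5) _ c1(4) g] f e4 xy c1 by simp
qed


lemma D6: "x \<in> A \<Longrightarrow> y \<in> A \<Longrightarrow> le (pr [x,y]) (p (pr [x,x]) (pr [y,y]))"
proof -
  assume xy: "x \<in> A" "y \<in> A"
  have "p (m x x) (m y y) = p (p (m x x) (m y y)) (m x y)" using id5 xy by blast
  then show ?thesis using xy by (simp add: pr_Cons p_comm[of "m x y"])
qed

lemma D7: "3 \<le> length w \<Longrightarrow> 3 \<le> length u \<Longrightarrow> set w \<subseteq> A \<Longrightarrow> set u \<subseteq> set w \<Longrightarrow> le (pr w) (pr u)"
proof -
  assume a: "3 \<le> length w" "3 \<le> length u" "set w \<subseteq> A" "set u \<subseteq> set w"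
  have "pr w = pr (u @ w)" using collapse_app[of w u] a by simp
  also have "\<dots> = m (pr u) (pr w)" using a by (intro pr_append) auto
  moreover have "pr w \<in> A" "set u \<subseteq> A" using a by (auto intro!: pr_closed)
  ultimately show ?thesis using absorb[of u "pr w"] a by metis
qed

lemma D8: "3 \<le> length w \<Longrightarrow> set w \<subseteq> A \<Longrightarrow> x \<in> set w \<Longrightarrow> y \<in> set w \<Longrightarrow> le (pr w) (p x (m x y))"
proof -
  assume a: "3 \<le> length w" "set w \<subseteq> A" "x \<in> set w" "y \<in> set w"
  then have xy: "x \<in> A" "y \<in> A" by auto
  have "pr w = pr ([x,x,y] @ w)" using collapse_app[of w "[x,x,y]"] a by simp
  also have "\<dots> = m (pr [x,x,y]) (pr w)" using a xy by (intro pr_append) auto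
  moreover have "pr w \<in> A" using a by (auto intro!: pr_closed)
  ultimately have 1: "le (pr w) (pr [x,x,y])" using absorb[of "[x,x,y]" "pr w"] a xy by auto
  have "p x (m x y) = p x (pr [x,x,y])" using xy id4[of x y] by (simp add: pr_Cons m_assoc)
  moreover have "le (pr [x,x,y]) (p x (pr [x,x,y]))" using xy by (simp add: le_addR pr_Cons)
  moreover have "pr w \<in> A" using a by (auto intro!: pr_closed)
  ultimately show ?thesis using le_trans[OF _ _ _ 1] xy a by (simp add: pr_Cons)
qed

end

lemma add4_assoc: "add4 (add4 x y) z = add4 x (add4 y z)" by (cases x; cases y; cases z) auto
lemma add4_comm: "add4 x y = add4 y x" by (cases x; cases y) auto
lemma add4_idem: "add4 x x = x" by (cases x) auto
lemma mul4_assoc: "mul4 (mul4 x y) z = mul4 x (mul4 y z)" by (cases x; cases y; cases z) auto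
lemma mul4_comm: "mul4 x y = mul4 y x" by (cases x; cases y) auto
lemma mul4_distL: "mul4 x (add4 y z) = add4 (mul4 x y) (mul4 x z)" by (cases x; cases y; cases z) auto
lemma mul4_distR: "mul4 (add4 x y) z = add4 (mul4 x z) (mul4 y z)" by (cases x; cases y; cases z) auto

lemma S_csr: "csr (UNIV :: s4 set) add4 mul4"
  unfolding csr_def ai_semiring_def
  apply (intro conjI ballI)
  apply (simp_all add: add4_assoc add4_idem mul4_assoc mul4_distL mul4_distR)
  apply (simp_all add: add4_comm mul4_comm)
  done

interpretation S: csr "UNIV :: s4 set" add4 mul4 by (rule S_csr)

lemma prS: "u \<noteq> [] \<Longrightarrow> prodG mul4 v u = (if \<exists>z\<in>set u. v z = E2 then E2 else if length u = 1 then v (hd u)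
   else if length u = 2 then (if \<forall>z\<in>set u. v z = E4 then E3 else E1) else E1)"
proof (induction u rule: induct_list012)
  case (3 x y zs)
  show ?case
  proof (cases zs)
    case Nil then show ?thesis by (cases "v x"; cases "v y") auto
  next
    case (Cons a l)
    then show ?thesis using 3(2) by (cases "v x"; auto split: if_splits)
  qed
qed auto

lemma len1: "length u = 1 \<Longrightarrow> u = [hd u]" by (cases u) auto
lemma len2: "length u = 2 \<Longrightarrow> set u = {x} \<Longrightarrow> u = [x,x]"
  by (cases u; cases "tl u") auto

lemma S_bound: "(\<forall>u\<in>mons t. add4 (prodG mul4 v u) X = X) \<Longrightarrow> add4 (ev add4 mul4 v t) X = X"
  by (rule S.mono2) auto


lemma WL:
  assumes lw: "3 \<le> length w"
    and H: "\<forall>v. add4 (prodG mul4 v w) (ev add4 mul4 v t) = ev add4 mul4 v t"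
  shows "(\<exists>u\<in>mons t. 3 \<le> length u \<and> set u \<subseteq> set w) \<or>
         (\<exists>x q. [x] \<in> mons t \<and> q \<in> mons t \<and> length q = 2 \<and> x \<in> set q \<and> set q \<subseteq> set w)"
proof (rule ccontr)
  assume N: "\<not> ?thesis"
  define v where "v z = (if z \<notin> set w then E2 else if [z] \<in> mons t then E3 else E4)" for z
  have "\<forall>u\<in>mons t. add4 (prodG mul4 v u) E3 = E3"
  proof
    fix u assume u: "u \<in> mons t"
    then have ne: "u \<noteq> []" using mons_ne by blast
    show "add4 (prodG mul4 v u) E3 = E3"
    proof (cases "\<exists>z\<in>set u. v z = E2")
      case True then show ?thesis by (simp add: prS ne)
    next
      case False
      then have sub: "set u \<subseteq> set w" by (auto simp: v_def split: if_splits)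
      have "0 < length u" using ne by simp
      then have "length u = 1 \<or> length u = 2 \<or> 3 \<le> length u" by linarith
      then consider "length u = 1" | "length u = 2" | "3 \<le> length u" by blast
      then show ?thesis
      proof cases
        case 1
        then have "u = [hd u]" by (rule len1)
        then have "[hd u] \<in> mons t" "hd u \<in> set w" using u sub by (metis, metis list.set_intros(1) subsetD)
        then have "v (hd u) = E3" by (simp add: v_def)
        then show ?thesis using 1 False ne by (simp add: prS)
      next
        case 2
        show ?thesis
        proof (cases "\<forall>z\<in>set u. v z = E4")
          case True then show ?thesis using 2 False ne by (simp add: prS)
        next
          case F2: False
          then obtain z where z: "z \<in> set u" "v z \<noteq> E4" by blast
          then have "v z \<noteq> E2" using False by blast
          then have "[z] \<in> mons t" using z by (auto simp: v_def split: if_splits)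
          then show ?thesis using N u 2 z sub by blast
        qed
      next
        case 3 then show ?thesis using N u sub by blast
      qed
    qed
  qed
  then have e: "add4 (ev add4 mul4 v t) E3 = E3" by (rule S_bound)
  have "\<forall>z\<in>set w. v z \<noteq> E2" by (simp add: v_def)
  then have "prodG mul4 v w = E1" using lw by (subst prS) auto
  then have "add4 E1 (ev add4 mul4 v t) = ev add4 mul4 v t" using H by metis
  then show False using e by (cases "ev add4 mul4 v t") auto
qed

lemma WX:
  assumes H: "\<forall>v. add4 (prodG mul4 v [x]) (ev add4 mul4 v t) = ev add4 mul4 v t"
  shows "[x] \<in> mons t \<or> (\<exists>u\<in>mons t. 3 \<le> length u \<and> set u = {x})"
proof (rule ccontr)
  assume N: "\<not> ?thesis"
  define v where "v z = (if z = x then E4 else E2)" for z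
  have "\<forall>u\<in>mons t. add4 (prodG mul4 v u) E3 = E3"
  proof
    fix u assume u: "u \<in> mons t"
    then have ne: "u \<noteq> []" using mons_ne by blast
    show "add4 (prodG mul4 v u) E3 = E3"
    proof (cases "\<exists>z\<in>set u. v z = E2")
      case True then show ?thesis by (simp add: prS ne)
    next
      case False
      then have "\<forall>z\<in>set u. z = x" by (auto simp: v_def split: if_splits)
      then have sub: "set u = {x}" using ne by (cases u) auto
      have "0 < length u" using ne by simp
      then have "length u = 1 \<or> length u = 2 \<or> 3 \<le> length u" by linarith
      then consider "length u = 1" | "length u = 2" | "3 \<le> length u" by blast
      then show ?thesis
      proof cases
        case 1
        then have "u = [x]" using sub by (metis len1 list.set(1) list.simps(15) singleton_insert_inj_eq)
        then show ?thesis using N u by blast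
      next
        case 2 then show ?thesis using False ne sub by (simp add: prS v_def)
      next
        case 3 then show ?thesis using N u sub by blast
      qed
    qed
  qed
  then have e: "add4 (ev add4 mul4 v t) E3 = E3" by (rule S_bound)
  have "add4 E4 (ev add4 mul4 v t) = ev add4 mul4 v t" using spec[OF H, of v] by (simp add: v_def)
  then show False using e by (cases "ev add4 mul4 v t") auto
qed


lemma WXX:
  assumes H: "\<forall>v. add4 (prodG mul4 v [x,x]) (ev add4 mul4 v t) = ev add4 mul4 v t"
  shows "[x,x] \<in> mons t \<or> (\<exists>u\<in>mons t. 3 \<le> length u \<and> set u = {x})"
proof (rule ccontr)
  assume N: "\<not> ?thesis"
  define v where "v z = (if z = x then E4 else E2)" for z
  have "\<forall>u\<in>mons t. add4 (prodG mul4 v u) E4 = E4"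
  proof
    fix u assume u: "u \<in> mons t"
    then have ne: "u \<noteq> []" using mons_ne by blast
    show "add4 (prodG mul4 v u) E4 = E4"
    proof (cases "\<exists>z\<in>set u. v z = E2")
      case True then show ?thesis by (simp add: prS ne)
    next
      case False
      then have "\<forall>z\<in>set u. z = x" by (auto simp: v_def split: if_splits)
      then have sub: "set u = {x}" using ne by (cases u) auto
      have "0 < length u" using ne by simp
      then have "length u = 1 \<or> length u = 2 \<or> 3 \<le> length u" by linarith
      then consider "length u = 1" | "length u = 2" | "3 \<le> length u" by blast
      then show ?thesis
      proof cases
        case 1
        then have "u = [x]" using sub by (metis len1 list.set(1) list.simps(15) singleton_insert_inj_eq)
        then show ?thesis by (simp add: v_def)
      next
        case 2 then have "u = [x,x]" using sub by (rule len2)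
        then show ?thesis using N u by blast
      next
        case 3 then show ?thesis using N u sub by blast
      qed
    qed
  qed
  then have e: "add4 (ev add4 mul4 v t) E4 = E4" by (rule S_bound)
  have "add4 E3 (ev add4 mul4 v t) = ev add4 mul4 v t" using spec[OF H, of v] by (simp add: v_def)
  then show False using e by (cases "ev add4 mul4 v t") auto
qed


lemma WXY:
  assumes xy: "x \<noteq> y"
    and H: "\<forall>v. add4 (prodG mul4 v [x,y]) (ev add4 mul4 v t) = ev add4 mul4 v t"
    and N1: "\<forall>u\<in>mons t. set u \<noteq> {x,y}"
    and N2: "\<forall>u\<in>mons t. 3 \<le> length u \<longrightarrow> set u \<noteq> {x} \<and> set u \<noteq> {y}"
    and nx: "\<not>([x] \<in> mons t \<and> [x,x] \<in> mons t)" "\<not>([y] \<in> mons t \<and> [y,y] \<in> mons t)"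
    "\<not>([x,x] \<in> mons t \<and> [y,y] \<in> mons t)"
  shows False
proof -
  define v where "v z = (if z = x then (if [x,x] \<in> mons t then E4 else E3)
     else if z = y then (if [y,y] \<in> mons t then E4 else E3) else E2)" for z
  have "\<forall>u\<in>mons t. add4 (prodG mul4 v u) E3 = E3"
  proof
    fix u assume u: "u \<in> mons t"
    then have ne: "u \<noteq> []" using mons_ne by blast
    show "add4 (prodG mul4 v u) E3 = E3"
    proof (cases "\<exists>z\<in>set u. v z = E2")
      case True then show ?thesis by (simp add: prS ne)
    next
      case False
      then have sub: "set u \<subseteq> {x,y}" by (auto simp: v_def split: if_splits)
      have "set u \<noteq> {x,y}" using N1 u by simp
      moreover have "x \<in> set u \<or> y \<in> set u" using sub ne by (cases u) auto
      ultimately have sub2: "set u = {x} \<or> set u = {y}" using sub by auto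
      have "0 < length u" using ne by simp
      then have "length u = 1 \<or> length u = 2 \<or> 3 \<le> length u" by linarith
      then consider "length u = 1" | "length u = 2" | "3 \<le> length u" by blast
      then show ?thesis
      proof cases
        case 1
        then have u1: "u = [hd u]" by (rule len1)
        then have "set u = {hd u}" by (metis list.set(1) list.simps(15))
        then have "hd u = x \<or> hd u = y" using sub2 by auto
        then have "u = [x] \<or> u = [y]" using u1 by metis
        then show ?thesis
        proof
          assume "u = [x]"
          then have "[x,x] \<notin> mons t" using nx(1) u by simp
          then show ?thesis using \<open>u = [x]\<close> by (simp add: v_def)
        next
          assume "u = [y]"
          then have "[y,y] \<notin> mons t" using nx(2) u by simp
          then show ?thesis using \<open>u = [y]\<close> xy by (simp add: v_def)
        qed
      next
        case 2 then have "u = [x,x] \<or> u = [y,y]" using sub2 len2[OF 2, of x] len2[OF 2, of y] by argo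
        then show ?thesis
        proof
          assume a: "u = [x,x]"
          then have "v x = E4" using u by (simp add: v_def)
          then show ?thesis using a by simp
        next
          assume a: "u = [y,y]"
          then have "v y = E4" using u xy by (simp add: v_def)
          then show ?thesis using a by simp
        qed
      next
        case 3 then show ?thesis using N2 u sub2 by auto
      qed
    qed
  qed
  then have e: "add4 (ev add4 mul4 v t) E3 = E3" by (rule S_bound)
  have "v x \<noteq> E2" "v y \<noteq> E2" "\<not> (v x = E4 \<and> v y = E4)" using nx(3) xy by (auto simp: v_def)
  then have "prodG mul4 v [x,y] = E1" by (cases "v x"; cases "v y") auto
  then have "add4 E1 (ev add4 mul4 v t) = ev add4 mul4 v t" using H by metis
  then show False using e by (cases "ev add4 mul4 v t") auto
qed


context sig
begin

lemma monA: "vars t \<subseteq> A \<Longrightarrow> u \<in> mons t \<Longrightarrow> u \<noteq> [] \<and> set u \<subseteq> A"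
  using mons_ne by blast

lemma le_mon: "vars t \<subseteq> A \<Longrightarrow> u \<in> mons t \<Longrightarrow> le (pr u) (ev p m id t)"
  unfolding pr_def by (rule mono1) auto

lemma evA: "vars t \<subseteq> A \<Longrightarrow> ev p m id t \<in> A"
  by (rule ev_closed) auto

lemma le_via: "vars t \<subseteq> A \<Longrightarrow> u \<in> mons t \<Longrightarrow> a \<in> A \<Longrightarrow> le a (pr u) \<Longrightarrow> le a (ev p m id t)"
  using le_trans[of a "pr u" "ev p m id t"] le_mon[of t u] monA[of t u] evA[of t] by auto

lemma le_via2: "vars t \<subseteq> A \<Longrightarrow> u1 \<in> mons t \<Longrightarrow> u2 \<in> mons t \<Longrightarrow> a \<in> A \<Longrightarrow>
   le a (p (pr u1) (pr u2)) \<Longrightarrow> le a (ev p m id t)"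
proof -
  assume a: "vars t \<subseteq> A" "u1 \<in> mons t" "u2 \<in> mons t" "a \<in> A" "le a (p (pr u1) (pr u2))"
  have c: "pr u1 \<in> A" "pr u2 \<in> A" "ev p m id t \<in> A" using a monA[of t u1] monA[of t u2] evA by auto
  have "le (p (pr u1) (pr u2)) (ev p m id t)"
    using le_sum[OF c le_mon[OF a(1,2)] le_mon[OF a(1,3)]] .
  then show ?thesis using le_trans[OF a(4) _ c(3) a(5)] c by simp
qed

lemma LM:
  assumes w: "w \<noteq> []" "set w \<subseteq> A" and t: "vars t \<subseteq> A"
    and H: "\<forall>v. add4 (prodG mul4 v w) (ev add4 mul4 v t) = ev add4 mul4 v t"
  shows "le (pr w) (ev p m id t)"
proof -
  have "0 < length w" using w by simp
  then have "length w = 1 \<or> length w = 2 \<or> 3 \<le> length w" by linarith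
  then consider "length w = 1" | "length w = 2" | "3 \<le> length w" by blast
  then show ?thesis
  proof cases
    case 1
    then obtain x where wx: "w = [x]" by (metis len1)
    then have x: "x \<in> A" using w by simp
    from WX[of x t] H wx consider "[x] \<in> mons t" | u where "u \<in> mons t" "3 \<le> length u" "set u = {x}"
      by blast
    then show ?thesis
    proof cases
      case 1 then show ?thesis using le_mon[OF t 1] wx by simp
    next
      case 2
      have "pr u = pr [x,x,x]" using 2 monA[OF t 2(1)] by (intro collapse) auto
      then show ?thesis using le_via[OF t 2(1)] D1[OF x] wx x by simp
    qed
  next
    case 2
    then obtain x y where wxy: "w = [x,y]" by (cases w; cases "tl w") auto
    then have xy: "x \<in> A" "y \<in> A" using w by auto
    show ?thesis
    proof (cases "x = y")
      case True
      from WXX[of x t] H wxy True consider "[x,x] \<in> mons t" | u where "u \<in> mons t" "3 \<le> length u" "set u = {x}"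
        by blast
      then show ?thesis
      proof cases
        case 1 then show ?thesis using le_mon[OF t] wxy True by simp
      next
        case 2
        have "pr u = pr [x,x,x]" using 2 monA[OF t 2(1)] by (intro collapse) auto
        then show ?thesis using le_via[OF t 2(1)] D2[OF xy(1)] wxy True xy by simp
      qed
    next
      case False
      have H': "\<forall>v. add4 (prodG mul4 v [x,y]) (ev add4 mul4 v t) = ev add4 mul4 v t" using H wxy by simp
      have wA: "pr [x,y] \<in> A" using xy by simp
      have cyx: "pr [y,x] = pr [x,y]" using xy by (simp add: pr_Cons m_comm)
      show ?thesis
      proof (cases "\<exists>u\<in>mons t. set u = {x,y}")
        case True
        then obtain u where u: "u \<in> mons t" "set u = {x,y}" by blast
        have uA: "u \<noteq> []" "set u \<subseteq> A" using monA[OF t u(1)] by auto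
        have "0 < length u" using uA by simp
        then have "length u = 1 \<or> length u = 2 \<or> 3 \<le> length u" by linarith
        then consider "length u = 1" | "length u = 2" | "3 \<le> length u" by blast
        then show ?thesis
        proof cases
          case 1
          then have "u = [hd u]" by (rule len1)
          then have "set u = {hd u}" by (metis list.set(1) list.simps(15))
          then show ?thesis using u(2) False by (metis doubleton_eq_iff insert_absorb2 singleton_insert_inj_eq)
        next
          case 2
          then obtain a b where ab: "u = [a,b]" by (cases u; cases "tl u") auto
          then have "{a,b} = {x,y}" using u by simp
          then have "pr u = pr [x,y]" using ab cyx by (auto simp: doubleton_eq_iff)
          then show ?thesis using le_via[OF t u(1) wA] wxy wA by simp
        next
          case 3
          have "pr u = pr [x,x,y]" using 3 uA u by (intro collapse) auto
          then show ?thesis using le_via[OF t u(1) wA] D3[OF xy] wxy by simp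
        qed
      next
        case NA: False
        show ?thesis
        proof (cases "\<exists>u\<in>mons t. 3 \<le> length u \<and> (set u = {x} \<or> set u = {y})")
          case True
          then obtain u where u: "u \<in> mons t" "3 \<le> length u" "set u = {x} \<or> set u = {y}" by blast
          have uA: "u \<noteq> []" "set u \<subseteq> A" using monA[OF t u(1)] by auto
          from u(3) show ?thesis
          proof
            assume s: "set u = {x}"
            have "pr u = pr [x,x,x]" using u s uA by (intro collapse) auto
            then show ?thesis using le_via[OF t u(1) wA] D4[OF xy] wxy by simp
          next
            assume s: "set u = {y}"
            have "pr u = pr [y,y,y]" using u s uA by (intro collapse) auto
            then show ?thesis using le_via[OF t u(1) wA] D4[OF xy(2) xy(1)] wxy cyx by simp
          qed
        next
          case NB: False
          show ?thesis
          proof (cases "[x] \<in> mons t \<and> [x,x] \<in> mons t")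
            case True
            have "le (pr [x,y]) (p (pr [x,x]) (pr [x]))" using D4[OF xy] cube[OF xy(1)] by simp
            then show ?thesis using le_via2[OF t _ _ wA] True wxy by blast
          next
            case NC: False
            show ?thesis
            proof (cases "[y] \<in> mons t \<and> [y,y] \<in> mons t")
              case True
              have "le (pr [x,y]) (p (pr [y,y]) (pr [y]))" using D4[OF xy(2) xy(1)] cube[OF xy(2)] cyx by simp
              then show ?thesis using le_via2[OF t _ _ wA] True wxy by blast
            next
              case ND: False
              show ?thesis
              proof (cases "[x,x] \<in> mons t \<and> [y,y] \<in> mons t")
                case True
                then show ?thesis using le_via2[OF t _ _ wA] D6[OF xy] wxy by blast
              next
                case NE: False
                have "False"
                proof (rule WXY[OF False H'])
                  show "\<forall>u\<in>mons t. set u \<noteq> {x, y}" using NA by blast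
                  show "\<forall>u\<in>mons t. 3 \<le> length u \<longrightarrow> set u \<noteq> {x} \<and> set u \<noteq> {y}" using NB by blast
                qed (use NC ND NE in auto)
                then show ?thesis ..
              qed
            qed
          qed
        qed
      qed
    qed
  next
    case 3
    have wA: "pr w \<in> A" using w by simp
    from WL[OF 3, of t] H
    consider u where "u \<in> mons t" "3 \<le> length u" "set u \<subseteq> set w"
      | x q where "[x] \<in> mons t" "q \<in> mons t" "length q = 2" "x \<in> set q" "set q \<subseteq> set w"
      by blast
    then show ?thesis
    proof cases
      case 1
      then show ?thesis using le_via[OF t 1(1) wA] D7[OF 3 1(2) w(2) 1(3)] by simp
    next
      case 2
      then obtain a b where ab: "q = [a,b]" by (cases q; cases "tl q") auto
      have abA: "a \<in> A" "b \<in> A" using ab 2(5) w(2) by auto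
      have "x = a \<or> x = b" using ab 2(4) by auto
      then obtain y where y: "y \<in> set q" "pr q = m x y"
      proof
        assume "x = a" then show thesis using that[of b] ab by (simp add: pr_Cons)
      next
        assume "x = b" then show thesis using that[of a] ab abA by (simp add: pr_Cons m_comm)
      qed
      have xy: "x \<in> set w" "y \<in> set w" using 2 y by auto
      have "le (pr w) (p x (m x y))" using D8[OF 3 w(2) xy] .
      then have "le (pr w) (p (pr [x]) (pr q))" using y by simp
      then show ?thesis using le_via2[OF t 2(1) 2(2) wA] by simp
    qed
  qed
qed

lemma mainL:
  assumes t: "vars t \<subseteq> A" and u: "vars u \<subseteq> A"
    and H: "\<forall>v. ev add4 mul4 v t = ev add4 mul4 v u"
  shows "ev p m id t = ev p m id u"
proof -
  have 1: "le (ev p m id u) (ev p m id t)"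
    unfolding pr_def[symmetric]
  proof (rule mono2)
    show "\<forall>w\<in>mons u. le (prodG m id w) (ev p m id t)"
    proof
      fix w assume w: "w \<in> mons u"
      have "\<forall>v. add4 (prodG mul4 v w) (ev add4 mul4 v t) = ev add4 mul4 v t"
        using S.mono1[of _ u w] w H by simp
      then show "le (prodG m id w) (ev p m id t)"
        using LM[OF _ _ t] monA[OF u w] unfolding pr_def by blast
    qed
  qed (use u t evA in auto)
  have 2: "le (ev p m id t) (ev p m id u)"
  proof (rule mono2)
    show "\<forall>w\<in>mons t. le (prodG m id w) (ev p m id u)"
    proof
      fix w assume w: "w \<in> mons t"
      have "\<forall>v. add4 (prodG mul4 v w) (ev add4 mul4 v u) = ev add4 mul4 v u"
        using S.mono1[of _ t w] w H by simp
      then show "le (prodG m id w) (ev p m id u)"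
        using LM[OF _ _ u] monA[OF t w] unfolding pr_def by blast
    qed
  qed (use u t evA in auto)
  show ?thesis using le_antisym[OF evA[OF t] evA[OF u] 2 1] .
qed

end


lemma s4_id6: "mul4 (mul4 a b) c = add4 (mul4 (mul4 a b) c) (mul4 (mul4 (mul4 a b) c) d)"
  by (cases a; cases b; cases c; cases d) auto

lemma forward:
  assumes "in_V_S4 A p m"
  shows "satisfies_Sigma A p m"
proof -
  obtain B :: "(('a \<Rightarrow> s4) \<Rightarrow> s4) set" and h where
    cl: "\<forall>f\<in>B. \<forall>g\<in>B. (\<lambda>j. add4 (f j) (g j)) \<in> B \<and> (\<lambda>j. mul4 (f j) (g j)) \<in> B" and
    img: "h ` B = A" and
    hom: "\<forall>f\<in>B. \<forall>g\<in>B. h (\<lambda>j. add4 (f j) (g j)) = p (h f) (h g) \<and>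
                      h (\<lambda>j. mul4 (f j) (g j)) = m (h f) (h g)"
    using assms unfolding in_V_S4_def by blast
  have cp[simp]: "\<And>f g. f \<in> B \<Longrightarrow> g \<in> B \<Longrightarrow> (\<lambda>j. add4 (f j) (g j)) \<in> B" using cl by blast
  have cm[simp]: "\<And>f g. f \<in> B \<Longrightarrow> g \<in> B \<Longrightarrow> (\<lambda>j. mul4 (f j) (g j)) \<in> B" using cl by blast
  have hp[simp]: "\<And>f g. f \<in> B \<Longrightarrow> g \<in> B \<Longrightarrow> p (h f) (h g) = h (\<lambda>j. add4 (f j) (g j))"
    using hom by simp
  have hm[simp]: "\<And>f g. f \<in> B \<Longrightarrow> g \<in> B \<Longrightarrow> m (h f) (h g) = h (\<lambda>j. mul4 (f j) (g j))"
    using hom by simp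
  have pre: "\<And>x. x \<in> A \<Longrightarrow> \<exists>f\<in>B. x = h f" using img by blast
  show ?thesis unfolding satisfies_Sigma_def
  proof (intro conjI ballI)
    fix x y assume "x \<in> A" "y \<in> A"
    then obtain f g where f: "f \<in> B" "x = h f" and g: "g \<in> B" "y = h g" using pre by blast
    show "m x y = m y x" using f g
      by simp (rule arg_cong[where f=h], rule ext, simp add: mul4_comm)
  next
    fix x assume "x \<in> A"
    then obtain f where f: "f \<in> B" "x = h f" using pre by blast
    show "m (m (m x x) x) x = m (m x x) x" using f
      by simp (rule arg_cong[where f=h], rule ext, case_tac "f j", auto)
  next
    fix x assume "x \<in> A"
    then obtain f where f: "f \<in> B" "x = h f" using pre by blast
    show "m (m x x) x = p (m x x) x" using f
      by simp (rule arg_cong[where f=h], rule ext, case_tac "f j", auto)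
  next
    fix x y assume "x \<in> A" "y \<in> A"
    then obtain f g where f: "f \<in> B" "x = h f" and g: "g \<in> B" "y = h g" using pre by blast
    show "p x (m x y) = p x (m (m x x) y)" using f g
      by simp (rule arg_cong[where f=h], rule ext, case_tac "f j"; case_tac "g j"; auto)
  next
    fix x y assume "x \<in> A" "y \<in> A"
    then obtain f g where f: "f \<in> B" "x = h f" and g: "g \<in> B" "y = h g" using pre by blast
    show "p (m x x) (m y y) = p (p (m x x) (m y y)) (m x y)" using f g
      by simp (rule arg_cong[where f=h], rule ext, case_tac "f j"; case_tac "g j"; auto)
  next
    fix x1 x2 x3 x4 assume "x1 \<in> A" "x2 \<in> A" "x3 \<in> A" "x4 \<in> A"
    then obtain f1 f2 f3 f4 where f: "f1 \<in> B" "x1 = h f1" "f2 \<in> B" "x2 = h f2"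
      "f3 \<in> B" "x3 = h f3" "f4 \<in> B" "x4 = h f4" using pre by meson
    show "m (m x1 x2) x3 = p (m (m x1 x2) x3) (m (m (m x1 x2) x3) x4)" using f
      by simp (rule arg_cong[where f=h], rule ext, rule s4_id6)
  qed
qed

lemma backward:
  fixes A :: "'a set"
  assumes ai: "ai_semiring A p m" and sat: "satisfies_Sigma A p m"
  shows "in_V_S4 A p m"
proof -
  have mc: "\<forall>x\<in>A. \<forall>y\<in>A. m x y = m y x" using sat unfolding satisfies_Sigma_def by blast
  interpret sig A p m
    by (rule sig.intro, rule csr.intro[OF ai mc], rule sig_axioms.intro[OF sat])
  define B :: "(('a \<Rightarrow> s4) \<Rightarrow> s4) set" where
    "B = {F. \<exists>t. vars t \<subseteq> A \<and> F = (\<lambda>v. ev add4 mul4 v t)}"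
  define h where "h F = ev p m id (SOME t. vars t \<subseteq> A \<and> F = (\<lambda>v. ev add4 mul4 v t))" for F
  have wd: "h (\<lambda>v. ev add4 mul4 v t) = ev p m id t" if t: "vars t \<subseteq> A" for t
  proof -
    let ?Q = "\<lambda>t'. vars t' \<subseteq> A \<and> (\<lambda>v. ev add4 mul4 v t) = (\<lambda>v. ev add4 mul4 v t')"
    define t' where "t' = (SOME t'. ?Q t')"
    have q: "?Q t'" unfolding t'_def by (rule someI[of ?Q t]) (use t in simp)
    have "\<forall>v. ev add4 mul4 v t = ev add4 mul4 v t'" using q by (simp add: fun_eq_iff)
    then have "ev p m id t = ev p m id t'" using mainL[OF t] q by blast
    moreover have "h (\<lambda>v. ev add4 mul4 v t) = ev p m id t'" unfolding h_def t'_def by simp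
    ultimately show ?thesis by simp
  qed
  show ?thesis unfolding in_V_S4_def
  proof (intro exI conjI)
    show "\<forall>f\<in>B. \<forall>g\<in>B. (\<lambda>j. add4 (f j) (g j)) \<in> B \<and> (\<lambda>j. mul4 (f j) (g j)) \<in> B"
    proof (intro ballI conjI)
      fix f g assume "f \<in> B" "g \<in> B"
      then obtain t u where t: "vars t \<subseteq> A" "f = (\<lambda>v. ev add4 mul4 v t)"
        and u: "vars u \<subseteq> A" "g = (\<lambda>v. ev add4 mul4 v u)" unfolding B_def by blast
      show "(\<lambda>j. add4 (f j) (g j)) \<in> B" unfolding B_def
        by (rule CollectI, rule exI[of _ "P t u"]) (use t u in simp)
      show "(\<lambda>j. mul4 (f j) (g j)) \<in> B" unfolding B_def
        by (rule CollectI, rule exI[of _ "M t u"]) (use t u in simp)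
    qed
    show "h ` B = A"
    proof
      show "h ` B \<subseteq> A"
      proof
        fix y assume "y \<in> h ` B"
        then obtain t where t: "vars t \<subseteq> A" "y = h (\<lambda>v. ev add4 mul4 v t)" unfolding B_def by blast
        then show "y \<in> A" using wd[OF t(1)] evA[OF t(1)] by simp
      qed
      show "A \<subseteq> h ` B"
      proof
        fix x assume x: "x \<in> A"
        have "vars (V x) \<subseteq> A" using x by simp
        then have "(\<lambda>v. ev add4 mul4 v (V x)) \<in> B" unfolding B_def by blast
        moreover have "h (\<lambda>v. ev add4 mul4 v (V x)) = x" using wd[OF \<open>vars (V x) \<subseteq> A\<close>] by simp
        ultimately
        show "x \<in> h ` B" by force
      qed
    qed
    show "\<forall>f\<in>B. \<forall>g\<in>B. h (\<lambda>j. add4 (f j) (g j)) = p (h f) (h g) \<and>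
                      h (\<lambda>j. mul4 (f j) (g j)) = m (h f) (h g)"
    proof (intro ballI conjI)
      fix f g assume "f \<in> B" "g \<in> B"
      then obtain t u where t: "vars t \<subseteq> A" "f = (\<lambda>v. ev add4 mul4 v t)"
        and u: "vars u \<subseteq> A" "g = (\<lambda>v. ev add4 mul4 v u)" unfolding B_def by blast
      have tu: "vars (P t u) \<subseteq> A" "vars (M t u) \<subseteq> A" using t u by auto
      show "h (\<lambda>j. add4 (f j) (g j)) = p (h f) (h g)"
        using wd[OF tu(1)] wd[OF t(1)] wd[OF u(1)] t u by simp
      show "h (\<lambda>j. mul4 (f j) (g j)) = m (h f) (h g)"
        using wd[OF tu(2)] wd[OF t(1)] wd[OF u(1)] t u by simp
    qed
  qed
qed

theorem proposition7p8:
  fixes A :: "'a set" and p m :: "'a \<Rightarrow> 'a \<Rightarrow> 'a"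
  assumes "ai_semiring A p m"
  shows "in_V_S4 A p m \<longleftrightarrow> satisfies_Sigma A p m"
  using forward backward assms by blast

end
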